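(* There is an algorithm that, given strings $A,B$ and a common supersequence $S$ of $A$ and $B$, computes a minimal common supersequence $S'$ of $A$ and $B$ with $S'\subseteq S$ in $O(|S|+|A|+|B|)$ time.
   Context: $X\subseteq S$ means $X$ is a (not necessarily contiguous) subsequence of $S$. A common supersequence of $A$ and $B$ is a string $C$ with $A\subseteq C$ and $B\subseteq C$; it is minimal if no proper subsequence of $C$ is a common supersequence of $A$ and $B$. Time is measured in the standard RAM model with $O(1)$-time character comparisons. *)

theory Defs
  imports Main "HOL-Library.Sublist"
begin

definition common_supersequence :: "'a list \<Rightarrow> 'a list \<Rightarrow> 'a list \<Rightarrow> bool" where
  "common_supersequence A B C \<longleftrightarrow> subseq A C \<and> subseq B C"

definition minimal_common_supersequence :: "'a list \<Rightarrow> 'a list \<Rightarrow> 'a list \<Rightarrow> bool" where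
  "minimal_common_supersequence A B C \<longleftrightarrow>
     common_supersequence A B C \<and>
     (\<forall>D. strict_subseq D C \<longrightarrow> \<not> common_supersequence A B D)"

text \<open>Memory cells are indexed by naturals and hold naturals. Every instruction
costs one step. Characters are natural numbers; comparing two characters
(via subtraction and a zero test) takes O(1) steps.\<close>

datatype instr =
    LoadC nat nat
  | Add nat nat nat
  | Sub nat nat nat
  | LoadI nat nat
  | StoreI nat nat
  | JmpZ nat nat
  | Jmp nat

type_synonym config = "nat \<times> (nat \<Rightarrow> nat)"

fun exec_instr :: "instr \<Rightarrow> config \<Rightarrow> config" where
  "exec_instr (LoadC r c) (pc, M) = (Suc pc, M(r := c))"
| "exec_instr (Add r a b) (pc, M) = (Suc pc, M(r := M a + M b))"
| "exec_instr (Sub r a b) (pc, M) = (Suc pc, M(r := M a - M b))"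
| "exec_instr (LoadI r a) (pc, M) = (Suc pc, M(r := M (M a)))"
| "exec_instr (StoreI a r) (pc, M) = (Suc pc, M(M a := M r))"
| "exec_instr (JmpZ r l) (pc, M) = (if M r = 0 then l else Suc pc, M)"
| "exec_instr (Jmp l) (pc, M) = (l, M)"

definition halted :: "instr list \<Rightarrow> config \<Rightarrow> bool" where
  "halted P c \<longleftrightarrow> length P \<le> fst c"

definition step :: "instr list \<Rightarrow> config \<Rightarrow> config" where
  "step P c = (if halted P c then c else exec_instr (P ! fst c) c)"

definition run :: "instr list \<Rightarrow> nat \<Rightarrow> config \<Rightarrow> config" where
  "run P t c = (step P ^^ t) c"

text \<open>Input layout: M[0] = |A|, M[1] = |B|, M[2] = |S|, then A, B, S stored
consecutively from address 3; all other cells are 0. The program starts at pc 0.\<close>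
definition init_mem :: "nat list \<Rightarrow> nat list \<Rightarrow> nat list \<Rightarrow> nat \<Rightarrow> nat" where
  "init_mem A B S = (\<lambda>i.
     if i = 0 then length A else if i = 1 then length B else if i = 2 then length S
     else if i < 3 + length (A @ B @ S) then (A @ B @ S) ! (i - 3) else 0)"

definition ram_output :: "(nat \<Rightarrow> nat) \<Rightarrow> nat list" where
  "ram_output M = map (\<lambda>i. M (M 1 + i)) [0..<M 0]"

end

theory Submission
  imports Defs
begin

fun gm :: "'a list \<Rightarrow> 'a list \<Rightarrow> nat" where
  "gm X [] = 0"
| "gm [] (c # C) = 0"
| "gm (x # X) (c # C) = (if x = c then Suc (gm X C) else gm (x # X) C)"

lemma gm_le: "gm X C \<le> length X"
  by (induction X C rule: gm.induct) auto

lemma gm_sub: "subseq (take (gm X C) X) C"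
  by (induction X C rule: gm.induct) (auto intro: list_emb_Cons)

lemma gm_max: "subseq (take k X) C \<Longrightarrow> min k (length X) \<le> gm X C"
proof (induction X C arbitrary: k rule: gm.induct)
  case (1 X)
  then show ?case by (cases k; cases X) auto
next
  case (2 c C)
  then show ?case by simp
next
  case (3 x X c C)
  show ?case
  proof (cases k)
    case 0
    then show ?thesis by simp
  next
    case (Suc k')
    show ?thesis
    proof (cases "x = c")
      case True
      then show ?thesis using 3 Suc by fastforce
    next
      case False
      then have "subseq (take k (x # X)) C" using 3(3) Suc by simp
      then show ?thesis using 3(2)[OF False] False by simp
    qed
  qed
qed

lemma gm_iff: "subseq (take k X) C \<longleftrightarrow> min k (length X) \<le> gm X C"
proof
  assume "min k (length X) \<le> gm X C"
  then have "take k X = take (min k (length X)) (take (gm X C) X)"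
    using gm_le[of X C] by (simp add: min_def)
  then show "subseq (take k X) C"
    by (metis gm_sub subseq_order.order_trans take_is_prefix prefix_imp_subseq)
qed (rule gm_max)

lemma gm_snoc: "gm X (P @ [c]) = gm X P + (if gm X P < length X \<and> X ! gm X P = c then 1 else 0)"
proof (induction X P rule: gm.induct)
  case (1 X)
  then show ?case by (cases X) auto
next
  case (2 c C)
  have "gm [] C' = 0" for C' :: "'a list" by (cases C') auto
  then show ?case by simp
next
  case (3 x X c C)
  then show ?case by auto
qed

lemma subseq_rev: "subseq xs ys \<Longrightarrow> subseq (rev xs) (rev ys)"
  by (induction rule: list_emb.induct) (auto intro: subseq_rev_drop_many)

lemma subseq_rev_iff: "subseq (rev xs) (rev ys) \<longleftrightarrow> subseq xs ys"
  using subseq_rev by fastforce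

lemma subseq_concat_gm:
  "subseq X (P @ Q) \<longleftrightarrow> length X \<le> gm X P + gm (rev X) (rev Q)"
proof
  assume "subseq X (P @ Q)"
  then obtain X1 X2 where X: "X = X1 @ X2" "subseq X1 P" "subseq X2 Q"
    by (auto elim: subseq_appendE)
  have "take (length X1) X = X1" using X by simp
  then have "length X1 \<le> gm X P" using gm_max[of "length X1" X P] X by simp
  moreover have "take (length X2) (rev X) = rev X2" using X by simp
  then have "length X2 \<le> gm (rev X) (rev Q)"
    using gm_max[of "length X2" "rev X" "rev Q"] X subseq_rev by fastforce
  ultimately show "length X \<le> gm X P + gm (rev X) (rev Q)" using X by simp
next
  assume H: "length X \<le> gm X P + gm (rev X) (rev Q)"
  define k where "k = gm X P"
  have 1: "subseq (take k X) P" using gm_sub k_def by metis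
  have "rev (drop k X) = take (length X - k) (rev X)" by (simp add: rev_drop)
  moreover have "subseq (take (length X - k) (rev X)) (rev Q)"
    using H by (subst gm_iff) (simp add: k_def)
  ultimately have "subseq (drop k X) Q" using subseq_rev_iff by metis
  then show "subseq X (P @ Q)" using 1
    by (metis append_take_drop_id list_emb_append_mono)
qed

lemma strict_subseq_del:
  "subseq D P \<Longrightarrow> D \<noteq> P \<Longrightarrow> \<exists>i<length P. subseq D (take i P @ drop (Suc i) P)"
proof (induction P arbitrary: D)
  case Nil
  then show ?case by simp
next
  case (Cons x P)
  show ?case
  proof (cases D)
    case Nil
    then show ?thesis by auto
  next
    case (Cons d D')
    show ?thesis
    proof (cases "d = x \<and> subseq D' P")
      case True
      then have "D' \<noteq> P" using Cons.prems Cons by auto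
      then obtain i where "i < length P" "subseq D' (take i P @ drop (Suc i) P)"
        using Cons.IH True by blast
      then show ?thesis using True Cons by (intro exI[of _ "Suc i"]) auto
    next
      case False
      then have "subseq D P" using Cons.prems Cons by (auto split: if_splits)
      then show ?thesis by (intro exI[of _ 0]) auto
    qed
  qed
qed

fun gst :: "'a list \<Rightarrow> 'a list \<Rightarrow> 'a list \<Rightarrow> nat \<Rightarrow> 'a list" where
  "gst A B S 0 = []"
| "gst A B S (Suc k) = (if common_supersequence A B (gst A B S k @ drop (Suc k) S)
      then gst A B S k else gst A B S k @ [S ! k])"

lemma cs_mono: "common_supersequence A B D \<Longrightarrow> subseq D E \<Longrightarrow> common_supersequence A B E"
  unfolding common_supersequence_def by (meson subseq_order.order_trans)

lemma gst_inv:
  assumes "common_supersequence A B S" "k \<le> length S"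
  shows "common_supersequence A B (gst A B S k @ drop k S) \<and>
    (\<forall>i<length (gst A B S k). \<not> common_supersequence A B
        (take i (gst A B S k) @ drop (Suc i) (gst A B S k) @ drop k S)) \<and>
    subseq (gst A B S k) (take k S)"
  using assms(2)
proof (induction k)
  case 0
  then show ?case using assms by simp
next
  case (Suc k)
  define P where "P = gst A B S k"
  have kS: "k < length S" using Suc by simp
  have dk: "drop k S = S ! k # drop (Suc k) S" using kS by (simp add: Cons_nth_drop_Suc)
  have tk: "take (Suc k) S = take k S @ [S ! k]" using kS by (simp add: take_Suc_conv_app_nth)
  have IH: "common_supersequence A B (P @ drop k S)"
    "\<And>i. i<length P \<Longrightarrow> \<not> common_supersequence A B (take i P @ drop (Suc i) P @ drop k S)"
    "subseq P (take k S)"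
    using Suc P_def by auto
  show ?case
  proof (cases "common_supersequence A B (P @ drop (Suc k) S)")
    case True
    have "\<not> common_supersequence A B (take i P @ drop (Suc i) P @ drop (Suc k) S)" if "i<length P" for i
    proof
      assume "common_supersequence A B (take i P @ drop (Suc i) P @ drop (Suc k) S)"
      moreover have "subseq (take i P @ drop (Suc i) P @ drop (Suc k) S) (take i P @ drop (Suc i) P @ drop k S)"
        unfolding dk by (intro list_emb_append_mono) auto
      ultimately show False using IH(2)[OF that] cs_mono by blast
    qed
    moreover have "subseq P (take (Suc k) S)" using IH(3) tk by (simp add: subseq_rev_drop_many)
    ultimately show ?thesis using True by (simp add: P_def[symmetric])
  next
    case False
    have g: "gst A B S (Suc k) = P @ [S ! k]" using False by (simp add: P_def)
    have "\<not> common_supersequence A B (take i (P @ [S ! k]) @ drop (Suc i) (P @ [S ! k]) @ drop (Suc k) S)"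
      if "i < length (P @ [S ! k])" for i
    proof (cases "i < length P")
      case True
      then show ?thesis using IH(2)[OF True] by (simp add: dk)
    next
      case False
      then have "i = length P" using that by simp
      then show ?thesis using \<open>\<not> common_supersequence A B (P @ drop (Suc k) S)\<close> by simp
    qed
    moreover have "common_supersequence A B (P @ [S ! k] @ drop (Suc k) S)" using IH(1) dk by simp
    moreover have "subseq (P @ [S ! k]) (take (Suc k) S)" using IH(3) tk by simp
    ultimately show ?thesis unfolding g by simp
  qed
qed

lemma gst_correct:
  assumes "common_supersequence A B S"
  shows "minimal_common_supersequence A B (gst A B S (length S)) \<and> subseq (gst A B S (length S)) S"
proof -
  define P where "P = gst A B S (length S)"
  have I: "common_supersequence A B P"
    "\<And>i. i<length P \<Longrightarrow> \<not> common_supersequence A B (take i P @ drop (Suc i) P)"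
    "subseq P S"
    using gst_inv[OF assms, of "length S"] by (auto simp: P_def)
  have "\<not> common_supersequence A B D" if "strict_subseq D P" for D
  proof
    assume D: "common_supersequence A B D"
    from that obtain i where "i < length P" "subseq D (take i P @ drop (Suc i) P)"
      using strict_subseq_del unfolding strict_subseq_def by blast
    then show False using I(2) D cs_mono by blast
  qed
  then show ?thesis using I unfolding minimal_common_supersequence_def P_def by blast
qed

definition prog :: "instr list" where
  "prog = [
    Add 0 0 1,
    Add 0 0 2,
    JmpZ 0 174,
    Add 1 1 0,
    Add 1 1 0,
    Add 1 1 0,
    Add 0 0 1,
    StoreI 0 1,
    LoadC 1 50,
    Add 0 0 1,
    StoreI 0 2,
    LoadC 2 1,
    Add 0 0 2,
    StoreI 0 3,
    Add 0 0 2,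
    StoreI 0 4,
    Add 0 0 2,
    StoreI 0 5,
    Add 0 0 2,
    StoreI 0 6,
    Add 0 0 2,
    StoreI 0 7,
    Add 0 0 2,
    StoreI 0 8,
    Add 0 0 2,
    StoreI 0 9,
    Add 0 0 2,
    StoreI 0 10,
    Add 0 0 2,
    StoreI 0 11,
    Add 0 0 2,
    StoreI 0 12,
    Add 0 0 2,
    StoreI 0 13,
    Add 0 0 2,
    StoreI 0 14,
    Add 0 0 2,
    StoreI 0 15,
    Add 0 0 2,
    StoreI 0 16,
    Add 0 0 2,
    StoreI 0 17,
    Add 0 0 2,
    StoreI 0 18,
    Add 0 0 2,
    StoreI 0 19,
    Add 0 0 2,
    StoreI 0 20,
    Add 0 0 2,
    StoreI 0 21,
    Add 0 0 2,
    StoreI 0 22,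
    Add 0 0 2,
    StoreI 0 23,
    LoadC 1 71,
    Sub 1 0 1,
    LoadI 1 1,
    LoadC 3 1,
    LoadC 18 21,
    Sub 23 0 18,
    Add 8 23 3,
    LoadI 4 23,
    LoadC 18 50,
    Sub 19 23 18,
    Sub 7 19 1,
    Sub 6 1 7,
    Sub 6 6 7,
    Sub 6 6 7,
    Sub 5 7 6,
    Sub 5 5 4,
    Add 9 8 5,
    Add 10 9 6,
    Add 11 10 4,
    Add 12 11 4,
    Add 12 12 3,
    Add 13 12 4,
    Add 13 13 3,
    LoadC 14 21,
    Sub 18 7 14,
    JmpZ 18 87,
    LoadC 19 3,
    Add 19 19 14,
    LoadI 20 19,
    Add 21 8 14,
    StoreI 21 20,
    Add 14 14 3,
    Jmp 78,
    LoadC 14 0,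
    Add 14 14 4,
    LoadC 15 0,
    LoadC 16 0,
    Add 23 11 4,
    StoreI 23 15,
    Add 23 12 4,
    StoreI 23 16,
    JmpZ 14 126,
    Sub 14 14 3,
    Add 23 10 14,
    LoadI 20 23,
    Sub 18 5 15,
    JmpZ 18 110,
    Sub 18 9 15,
    Sub 18 18 3,
    LoadI 19 18,
    Sub 21 19 20,
    Sub 22 20 19,
    Add 21 21 22,
    JmpZ 21 109,
    Jmp 110,
    Add 15 15 3,
    Add 23 11 14,
    StoreI 23 15,
    Sub 18 6 16,
    JmpZ 18 123,
    Sub 18 10 16,
    Sub 18 18 3,
    LoadI 19 18,
    Sub 21 19 20,
    Sub 22 20 19,
    Add 21 21 22,
    JmpZ 21 122,
    Jmp 123,
    Add 16 16 3,
    Add 23 12 14,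
    StoreI 23 16,
    Jmp 95,
    LoadC 14 0,
    LoadC 15 0,
    LoadC 16 0,
    LoadC 17 0,
    Sub 18 4 14,
    JmpZ 18 170,
    Add 23 10 14,
    LoadI 20 23,
    Add 14 14 3,
    Add 23 11 14,
    LoadI 21 23,
    Add 23 12 14,
    LoadI 22 23,
    Add 18 15 21,
    Sub 18 5 18,
    JmpZ 18 143,
    Jmp 146,
    Add 18 16 22,
    Sub 18 6 18,
    JmpZ 18 130,
    Add 23 13 17,
    StoreI 23 20,
    Add 17 17 3,
    Sub 18 5 15,
    JmpZ 18 159,
    Add 18 8 15,
    LoadI 19 18,
    Sub 21 19 20,
    Sub 22 20 19,
    Add 21 21 22,
    JmpZ 21 158,
    Jmp 159,
    Add 15 15 3,
    Sub 18 6 16,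
    JmpZ 18 169,
    Add 18 9 16,
    LoadI 19 18,
    Sub 21 19 20,
    Sub 22 20 19,
    Add 21 21 22,
    JmpZ 21 168,
    Jmp 169,
    Add 16 16 3,
    Jmp 130,
    LoadC 0 0,
    Add 0 0 17,
    LoadC 1 0,
    Add 1 1 13]"

lemma prog_len: "length prog = 174"
  by (simp add: prog_def)

lemma prog_nth:
  "prog ! 0 = Add 0 0 1"
  "prog ! 1 = Add 0 0 2"
  "prog ! 2 = JmpZ 0 174"
  "prog ! 3 = Add 1 1 0"
  "prog ! 4 = Add 1 1 0"
  "prog ! 5 = Add 1 1 0"
  "prog ! 6 = Add 0 0 1"
  "prog ! 7 = StoreI 0 1"
  "prog ! 8 = LoadC 1 50"
  "prog ! 9 = Add 0 0 1"
  "prog ! 10 = StoreI 0 2"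
  "prog ! 11 = LoadC 2 1"
  "prog ! 12 = Add 0 0 2"
  "prog ! 13 = StoreI 0 3"
  "prog ! 14 = Add 0 0 2"
  "prog ! 15 = StoreI 0 4"
  "prog ! 16 = Add 0 0 2"
  "prog ! 17 = StoreI 0 5"
  "prog ! 18 = Add 0 0 2"
  "prog ! 19 = StoreI 0 6"
  "prog ! 20 = Add 0 0 2"
  "prog ! 21 = StoreI 0 7"
  "prog ! 22 = Add 0 0 2"
  "prog ! 23 = StoreI 0 8"
  "prog ! 24 = Add 0 0 2"
  "prog ! 25 = StoreI 0 9"
  "prog ! 26 = Add 0 0 2"
  "prog ! 27 = StoreI 0 10"
  "prog ! 28 = Add 0 0 2"
  "prog ! 29 = StoreI 0 11"
  "prog ! 30 = Add 0 0 2"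
  "prog ! 31 = StoreI 0 12"
  "prog ! 32 = Add 0 0 2"
  "prog ! 33 = StoreI 0 13"
  "prog ! 34 = Add 0 0 2"
  "prog ! 35 = StoreI 0 14"
  "prog ! 36 = Add 0 0 2"
  "prog ! 37 = StoreI 0 15"
  "prog ! 38 = Add 0 0 2"
  "prog ! 39 = StoreI 0 16"
  "prog ! 40 = Add 0 0 2"
  "prog ! 41 = StoreI 0 17"
  "prog ! 42 = Add 0 0 2"
  "prog ! 43 = StoreI 0 18"
  "prog ! 44 = Add 0 0 2"
  "prog ! 45 = StoreI 0 19"
  "prog ! 46 = Add 0 0 2"
  "prog ! 47 = StoreI 0 20"
  "prog ! 48 = Add 0 0 2"
  "prog ! 49 = StoreI 0 21"
  "prog ! 50 = Add 0 0 2"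
  "prog ! 51 = StoreI 0 22"
  "prog ! 52 = Add 0 0 2"
  "prog ! 53 = StoreI 0 23"
  "prog ! 54 = LoadC 1 71"
  "prog ! 55 = Sub 1 0 1"
  "prog ! 56 = LoadI 1 1"
  "prog ! 57 = LoadC 3 1"
  "prog ! 58 = LoadC 18 21"
  "prog ! 59 = Sub 23 0 18"
  "prog ! 60 = Add 8 23 3"
  "prog ! 61 = LoadI 4 23"
  "prog ! 62 = LoadC 18 50"
  "prog ! 63 = Sub 19 23 18"
  "prog ! 64 = Sub 7 19 1"
  "prog ! 65 = Sub 6 1 7"
  "prog ! 66 = Sub 6 6 7"
  "prog ! 67 = Sub 6 6 7"
  "prog ! 68 = Sub 5 7 6"
  "prog ! 69 = Sub 5 5 4"
  "prog ! 70 = Add 9 8 5"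
  "prog ! 71 = Add 10 9 6"
  "prog ! 72 = Add 11 10 4"
  "prog ! 73 = Add 12 11 4"
  "prog ! 74 = Add 12 12 3"
  "prog ! 75 = Add 13 12 4"
  "prog ! 76 = Add 13 13 3"
  "prog ! 77 = LoadC 14 21"
  "prog ! 78 = Sub 18 7 14"
  "prog ! 79 = JmpZ 18 87"
  "prog ! 80 = LoadC 19 3"
  "prog ! 81 = Add 19 19 14"
  "prog ! 82 = LoadI 20 19"
  "prog ! 83 = Add 21 8 14"
  "prog ! 84 = StoreI 21 20"
  "prog ! 85 = Add 14 14 3"
  "prog ! 86 = Jmp 78"
  "prog ! 87 = LoadC 14 0"
  "prog ! 88 = Add 14 14 4"
  "prog ! 89 = LoadC 15 0"
  "prog ! 90 = LoadC 16 0"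
  "prog ! 91 = Add 23 11 4"
  "prog ! 92 = StoreI 23 15"
  "prog ! 93 = Add 23 12 4"
  "prog ! 94 = StoreI 23 16"
  "prog ! 95 = JmpZ 14 126"
  "prog ! 96 = Sub 14 14 3"
  "prog ! 97 = Add 23 10 14"
  "prog ! 98 = LoadI 20 23"
  "prog ! 99 = Sub 18 5 15"
  "prog ! 100 = JmpZ 18 110"
  "prog ! 101 = Sub 18 9 15"
  "prog ! 102 = Sub 18 18 3"
  "prog ! 103 = LoadI 19 18"
  "prog ! 104 = Sub 21 19 20"
  "prog ! 105 = Sub 22 20 19"
  "prog ! 106 = Add 21 21 22"
  "prog ! 107 = JmpZ 21 109"
  "prog ! 108 = Jmp 110"
  "prog ! 109 = Add 15 15 3"
  "prog ! 110 = Add 23 11 14"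
  "prog ! 111 = StoreI 23 15"
  "prog ! 112 = Sub 18 6 16"
  "prog ! 113 = JmpZ 18 123"
  "prog ! 114 = Sub 18 10 16"
  "prog ! 115 = Sub 18 18 3"
  "prog ! 116 = LoadI 19 18"
  "prog ! 117 = Sub 21 19 20"
  "prog ! 118 = Sub 22 20 19"
  "prog ! 119 = Add 21 21 22"
  "prog ! 120 = JmpZ 21 122"
  "prog ! 121 = Jmp 123"
  "prog ! 122 = Add 16 16 3"
  "prog ! 123 = Add 23 12 14"
  "prog ! 124 = StoreI 23 16"
  "prog ! 125 = Jmp 95"
  "prog ! 126 = LoadC 14 0"
  "prog ! 127 = LoadC 15 0"
  "prog ! 128 = LoadC 16 0"
  "prog ! 129 = LoadC 17 0"
  "prog ! 130 = Sub 18 4 14"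
  "prog ! 131 = JmpZ 18 170"
  "prog ! 132 = Add 23 10 14"
  "prog ! 133 = LoadI 20 23"
  "prog ! 134 = Add 14 14 3"
  "prog ! 135 = Add 23 11 14"
  "prog ! 136 = LoadI 21 23"
  "prog ! 137 = Add 23 12 14"
  "prog ! 138 = LoadI 22 23"
  "prog ! 139 = Add 18 15 21"
  "prog ! 140 = Sub 18 5 18"
  "prog ! 141 = JmpZ 18 143"
  "prog ! 142 = Jmp 146"
  "prog ! 143 = Add 18 16 22"
  "prog ! 144 = Sub 18 6 18"
  "prog ! 145 = JmpZ 18 130"
  "prog ! 146 = Add 23 13 17"
  "prog ! 147 = StoreI 23 20"
  "prog ! 148 = Add 17 17 3"
  "prog ! 149 = Sub 18 5 15"
  "prog ! 150 = JmpZ 18 159"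
  "prog ! 151 = Add 18 8 15"
  "prog ! 152 = LoadI 19 18"
  "prog ! 153 = Sub 21 19 20"
  "prog ! 154 = Sub 22 20 19"
  "prog ! 155 = Add 21 21 22"
  "prog ! 156 = JmpZ 21 158"
  "prog ! 157 = Jmp 159"
  "prog ! 158 = Add 15 15 3"
  "prog ! 159 = Sub 18 6 16"
  "prog ! 160 = JmpZ 18 169"
  "prog ! 161 = Add 18 9 16"
  "prog ! 162 = LoadI 19 18"
  "prog ! 163 = Sub 21 19 20"
  "prog ! 164 = Sub 22 20 19"
  "prog ! 165 = Add 21 21 22"
  "prog ! 166 = JmpZ 21 168"
  "prog ! 167 = Jmp 169"
  "prog ! 168 = Add 16 16 3"
  "prog ! 169 = Jmp 130"
  "prog ! 170 = LoadC 0 0"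
  "prog ! 171 = Add 0 0 17"
  "prog ! 172 = LoadC 1 0"
  "prog ! 173 = Add 1 1 13"
  by (simp_all add: prog_def)

lemma run_0[simp]: "run P 0 c = c" by (simp add: run_def)
lemma run_Suc: "run P (Suc t) c = run P t (step P c)"
  unfolding run_def by (metis comp_apply funpow_Suc_right)
lemma run_add: "run P (a + b) c = run P b (run P a c)"
  unfolding run_def by (metis add.commute comp_apply funpow_add)

definition reach :: "config \<Rightarrow> config \<Rightarrow> nat \<Rightarrow> bool" where
  "reach c c' d \<longleftrightarrow> run prog d c = c'"

lemma reach_stop: "reach c c 0" by (simp add: reach_def)
lemma reach_go: "reach (step prog c) c' d \<Longrightarrow> reach c c' (Suc d)"
  by (simp add: reach_def run_Suc)
lemma reach_trans: "reach c1 c2 d1 \<Longrightarrow> reach c2 c3 d2 \<Longrightarrow> reach c1 c3 (d1 + d2)"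
  by (simp add: reach_def run_add)

lemma step_prog: "pc < 174 \<Longrightarrow> step prog (pc, M) = exec_instr (prog ! pc) (pc, M)"
  by (simp add: step_def halted_def prog_len)

lemma absdiff0: "((a::nat) - b) + (b - a) = 0 \<longleftrightarrow> a = b" by auto

lemma hi_neq: "24 \<le> (a::nat) \<Longrightarrow> numeral k < (24::nat) \<Longrightarrow> (a = numeral k) = False"
  "24 \<le> a \<Longrightarrow> numeral k < (24::nat) \<Longrightarrow> (numeral k = a) = False"
  by auto

lemma hi_neq23: "23 \<le> (a::nat) \<Longrightarrow> numeral k < (23::nat) \<Longrightarrow> (a = numeral k) = False"
  "23 \<le> (a::nat) \<Longrightarrow> numeral k < (23::nat) \<Longrightarrow> (numeral k = a) = False"
  by auto

lemma prog_nth1: "prog ! Suc 0 = Add 0 0 2" by (simp add: prog_def)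

lemma s2: "Suc (Suc 0) = 2" by simp

lemmas ex_simps = step_prog prog_nth prog_nth1 absdiff0 hi_neq hi_neq23

lemma blkA:
  assumes "M 3 = 1" "M 5 = la" "M 15 = g" "M 9 = bb" "M 20 = y"
    and "g < la \<longrightarrow> M (bb - Suc g) = v" "g < la \<longrightarrow> 24 \<le> bb - Suc g"
  shows "\<exists>M' d. reach (99, M) (110, M') d \<and> d \<le> 11 \<and>
     (\<forall>r. r \<notin> {15,18,19,21,22} \<longrightarrow> M' r = M r) \<and>
     M' 15 = g + (if g < la \<and> v = y then 1 else 0)"
proof (cases "la \<le> g")
  case False
  then have gl: "g < la" by simp
  note v = assms(6)[rule_format, OF gl] assms(7)[rule_format, OF gl]
  show ?thesis
  proof (cases "v = y")
    case True
    show ?thesis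
      apply (intro exI conjI)
         apply (rule reach_stop | (rule reach_go, simp del: add_is_0 add_eq_0_iff_both_eq_0 add: ex_simps assms v True False))+
      using gl True by (auto simp: assms)
  next
    case vy: False
    show ?thesis
      apply (intro exI conjI)
         apply (rule reach_stop | (rule reach_go, simp del: add_is_0 add_eq_0_iff_both_eq_0 add: ex_simps assms v vy False))+
      using gl vy by (auto simp: assms)
  qed
next
  case True
  show ?thesis
    apply (intro exI conjI)
       apply (rule reach_stop | (rule reach_go, simp del: add_is_0 add_eq_0_iff_both_eq_0 add: ex_simps assms True))+
    using True by (auto simp: assms)
qed

lemma blkB:
  assumes "M 3 = 1" "M 6 = la" "M 16 = g" "M 10 = bb" "M 20 = y"
    and "g < la \<longrightarrow> M (bb - Suc g) = v" "g < la \<longrightarrow> 24 \<le> bb - Suc g"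
  shows "\<exists>M' d. reach (112, M) (123, M') d \<and> d \<le> 11 \<and>
     (\<forall>r. r \<notin> {16,18,19,21,22} \<longrightarrow> M' r = M r) \<and>
     M' 16 = g + (if g < la \<and> v = y then 1 else 0)"
proof (cases "la \<le> g")
  case False
  then have gl: "g < la" by simp
  note v = assms(6)[rule_format, OF gl] assms(7)[rule_format, OF gl]
  show ?thesis
  proof (cases "v = y")
    case True
    show ?thesis
      apply (intro exI conjI)
         apply (rule reach_stop | (rule reach_go, simp del: add_is_0 add_eq_0_iff_both_eq_0 add: ex_simps assms v True False))+
      using gl True by (auto simp: assms)
  next
    case vy: False
    show ?thesis
      apply (intro exI conjI)
         apply (rule reach_stop | (rule reach_go, simp del: add_is_0 add_eq_0_iff_both_eq_0 add: ex_simps assms v vy False))+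
      using gl vy by (auto simp: assms)
  qed
next
  case True
  show ?thesis
    apply (intro exI conjI)
       apply (rule reach_stop | (rule reach_go, simp del: add_is_0 add_eq_0_iff_both_eq_0 add: ex_simps assms True))+
    using True by (auto simp: assms)
qed

lemma blkUA:
  assumes "M 3 = 1" "M 5 = la" "M 15 = g" "M 8 = bb" "M 20 = y"
    and "g < la \<longrightarrow> M (bb + g) = v" "g < la \<longrightarrow> 24 \<le> bb + g"
  shows "\<exists>M' d. reach (149, M) (159, M') d \<and> d \<le> 10 \<and>
     (\<forall>r. r \<notin> {15,18,19,21,22} \<longrightarrow> M' r = M r) \<and>
     M' 15 = g + (if g < la \<and> v = y then 1 else 0)"
proof (cases "la \<le> g")
  case False
  then have gl: "g < la" by simp
  note v = assms(6)[rule_format, OF gl] assms(7)[rule_format, OF gl]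
  show ?thesis
  proof (cases "v = y")
    case True
    show ?thesis
      apply (intro exI conjI)
         apply (rule reach_stop | (rule reach_go, simp del: add_is_0 add_eq_0_iff_both_eq_0 add: ex_simps assms v True False))+
      using gl True by (auto simp: assms)
  next
    case vy: False
    show ?thesis
      apply (intro exI conjI)
         apply (rule reach_stop | (rule reach_go, simp del: add_is_0 add_eq_0_iff_both_eq_0 add: ex_simps assms v vy False))+
      using gl vy by (auto simp: assms)
  qed
next
  case True
  show ?thesis
    apply (intro exI conjI)
       apply (rule reach_stop | (rule reach_go, simp del: add_is_0 add_eq_0_iff_both_eq_0 add: ex_simps assms True))+
    using True by (auto simp: assms)
qed

lemma blkUB:
  assumes "M 3 = 1" "M 6 = la" "M 16 = g" "M 9 = bb" "M 20 = y"
    and "g < la \<longrightarrow> M (bb + g) = v" "g < la \<longrightarrow> 24 \<le> bb + g"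
  shows "\<exists>M' d. reach (159, M) (169, M') d \<and> d \<le> 10 \<and>
     (\<forall>r. r \<notin> {16,18,19,21,22} \<longrightarrow> M' r = M r) \<and>
     M' 16 = g + (if g < la \<and> v = y then 1 else 0)"
proof (cases "la \<le> g")
  case False
  then have gl: "g < la" by simp
  note v = assms(6)[rule_format, OF gl] assms(7)[rule_format, OF gl]
  show ?thesis
  proof (cases "v = y")
    case True
    show ?thesis
      apply (intro exI conjI)
         apply (rule reach_stop | (rule reach_go, simp del: add_is_0 add_eq_0_iff_both_eq_0 add: ex_simps assms v True False))+
      using gl True by (auto simp: assms)
  next
    case vy: False
    show ?thesis
      apply (intro exI conjI)
         apply (rule reach_stop | (rule reach_go, simp del: add_is_0 add_eq_0_iff_both_eq_0 add: ex_simps assms v vy False))+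
      using gl vy by (auto simp: assms)
  qed
next
  case True
  show ?thesis
    apply (intro exI conjI)
       apply (rule reach_stop | (rule reach_go, simp del: add_is_0 add_eq_0_iff_both_eq_0 add: ex_simps assms True))+
    using True by (auto simp: assms)
qed

lemma loop_gen:
  assumes step: "\<And>k M. k < m \<Longrightarrow> Inv k M \<Longrightarrow> \<exists>M' d. reach (h, M) (h, M') d \<and> d \<le> b \<and> Inv (Suc k) M'"
    and init: "Inv 0 M"
  shows "\<exists>M' d. reach (h, M) (h, M') d \<and> d \<le> m * b \<and> Inv m M'"
proof -
  have "k \<le> m \<Longrightarrow> \<exists>M' d. reach (h, M) (h, M') d \<and> d \<le> k * b \<and> Inv k M'" for k
  proof (induction k)
    case 0
    then show ?case using init reach_stop by fastforce
  next
    case (Suc k)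
    then obtain M1 d1 where 1: "reach (h, M) (h, M1) d1" "d1 \<le> k * b" "Inv k M1" by auto
    obtain M2 d2 where 2: "reach (h, M1) (h, M2) d2" "d2 \<le> b" "Inv (Suc k) M2"
      using step[OF _ 1(3)] Suc.prems by auto
    show ?case using reach_trans[OF 1(1) 2(1)] 1 2 by (intro exI[of _ M2] exI[of _ "d1+d2"]) auto
  qed
  then show ?thesis by simp
qed

definition TT :: "nat list \<Rightarrow> nat list \<Rightarrow> nat list \<Rightarrow> nat" where
  "TT A B S = length A + length B + length S"

definition regs :: "nat list \<Rightarrow> nat list \<Rightarrow> nat list \<Rightarrow> nat \<Rightarrow> (nat \<Rightarrow> nat) \<Rightarrow> bool" where
  "regs A B S inb M \<longleftrightarrow> M 3 = 1 \<and> M 4 = length S \<and> M 5 = length A \<and> M 6 = length B \<and>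
     M 7 = TT A B S \<and> M 8 = inb \<and> M 9 = inb + length A \<and> M 10 = inb + length A + length B \<and>
     M 11 = inb + TT A B S \<and> M 12 = inb + TT A B S + Suc (length S) \<and>
     M 13 = inb + TT A B S + Suc (length S) + Suc (length S)"

lemma regs_frame: "regs A B S inb M \<Longrightarrow> (\<And>r. 3 \<le> r \<Longrightarrow> r \<le> 13 \<Longrightarrow> M' r = M r) \<Longrightarrow> regs A B S inb M'"
  unfolding regs_def by simp

definition cpy :: "nat list \<Rightarrow> nat list \<Rightarrow> nat list \<Rightarrow> nat \<Rightarrow> nat \<Rightarrow> (nat \<Rightarrow> nat) \<Rightarrow> bool" where
  "cpy A B S inb i M \<longleftrightarrow> regs A B S inb M \<and> M 14 = i \<and> 21 \<le> i \<and>
     (\<forall>j<TT A B S. j < i \<longrightarrow> M (inb + j) = (A @ B @ S) ! j) \<and>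
     (\<forall>j. i \<le> j \<longrightarrow> j < TT A B S \<longrightarrow> M (3 + j) = (A @ B @ S) ! j)"

lemma cpy_iter:
  assumes "cpy A B S inb i M" "i < TT A B S" "24 \<le> inb" "3 + TT A B S \<le> inb"
  shows "\<exists>M' d. reach (78, M) (78, M') d \<and> d \<le> 9 \<and> cpy A B S inb (Suc i) M'"
proof -
  have R: "M 3 = 1" "M 7 = TT A B S" "M 8 = inb" "M 14 = i" "21 \<le> i"
    using assms(1) unfolding cpy_def regs_def by auto
  have ne: "\<not> TT A B S \<le> i" "24 \<le> 3 + i" "24 \<le> inb + i" using assms R by auto
  show ?thesis
    apply (intro exI conjI)
      apply (rule reach_go, simp del: add_is_0 add_eq_0_iff_both_eq_0 add: ex_simps R ne)
      apply (rule reach_stop | (rule reach_go, simp del: add_is_0 add_eq_0_iff_both_eq_0 add: ex_simps R ne))+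
     apply simp
    using assms(1,3,4) ne R unfolding cpy_def regs_def
    apply (auto simp: less_Suc_eq)
    done
qed


definition gv :: "nat list \<Rightarrow> nat list \<Rightarrow> nat \<Rightarrow> nat" where
  "gv X S j = gm (rev X) (rev (drop j S))"

lemma gv_n: "gv X S (length S) = 0"
  by (simp add: gv_def)

lemma gv_step:
  assumes "j < length S"
  shows "gv X S j = gv X S (Suc j) + (if gv X S (Suc j) < length X \<and> X ! (length X - Suc (gv X S (Suc j))) = S ! j then 1 else 0)"
proof -
  have "rev (drop j S) = rev (drop (Suc j) S) @ [S ! j]"
    using assms by (simp add: Cons_nth_drop_Suc[symmetric])
  then show ?thesis unfolding gv_def
    by (auto simp: gm_snoc rev_nth)
qed

definition inp_ok :: "nat list \<Rightarrow> nat list \<Rightarrow> nat list \<Rightarrow> nat \<Rightarrow> (nat \<Rightarrow> nat) \<Rightarrow> bool" where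
  "inp_ok A B S inb M \<longleftrightarrow> (\<forall>j<TT A B S. M (inb + j) = (A @ B @ S) ! j)"

lemma inp_A: "inp_ok A B S inb M \<Longrightarrow> i < length A \<Longrightarrow> M (inb + i) = A ! i"
  unfolding inp_ok_def TT_def by (auto simp: nth_append)

lemma inp_B: "inp_ok A B S inb M \<Longrightarrow> i < length B \<Longrightarrow> M (inb + length A + i) = B ! i"
  unfolding inp_ok_def TT_def
  by (metis add.assoc add_less_cancel_left nth_append_length_plus nth_append trans_less_add1)

lemma inp_S: "inp_ok A B S inb M \<Longrightarrow> i < length S \<Longrightarrow> M (inb + length A + length B + i) = S ! i"
  unfolding inp_ok_def TT_def
  by (metis (no_types, lifting) add.assoc add_less_cancel_left append_assoc length_append nth_append_length_plus)

definition bwd :: "nat list \<Rightarrow> nat list \<Rightarrow> nat list \<Rightarrow> nat \<Rightarrow> nat \<Rightarrow> (nat \<Rightarrow> nat) \<Rightarrow> bool" where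
  "bwd A B S inb j M \<longleftrightarrow> regs A B S inb M \<and> inp_ok A B S inb M \<and> M 14 = j \<and> j \<le> length S \<and>
     M 15 = gv A S j \<and> M 16 = gv B S j \<and>
     (\<forall>i. j \<le> i \<longrightarrow> i \<le> length S \<longrightarrow> M (inb + TT A B S + i) = gv A S i \<and>
         M (inb + TT A B S + Suc (length S) + i) = gv B S i)"

lemma cpy_exit:
  assumes "cpy A B S inb i M" "TT A B S \<le> i" "24 \<le> inb"
  shows "\<exists>M' d. reach (78, M) (95, M') d \<and> d \<le> 10 \<and> bwd A B S inb (length S) M'"
proof -
  have R: "M 3 = 1" "M 4 = length S" "M 7 = TT A B S" "M 8 = inb" "M 11 = inb + TT A B S"
     "M 12 = inb + TT A B S + Suc (length S)" "M 14 = i"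
    using assms(1) unfolding cpy_def regs_def by auto
  have ne: "TT A B S \<le> i" "24 \<le> inb + TT A B S + length S" "24 \<le> inb + TT A B S + Suc (length S) + length S"
    using assms R by auto
  show ?thesis
    apply (intro exI conjI)
      apply (rule reach_stop | (rule reach_go, simp del: add_is_0 add_eq_0_iff_both_eq_0 add: ex_simps R ne))+
     apply simp
    using assms(1,3) ne R unfolding cpy_def regs_def bwd_def inp_ok_def
    apply (auto simp: gv_n)
    done
qed


lemma bwd_iter:
  assumes B: "bwd A B S inb j M" and j: "0 < j" and ib: "24 \<le> inb"
  shows "\<exists>M' d. reach (95, M) (95, M') d \<and> d \<le> 35 \<and> bwd A B S inb (j - 1) M'"
proof -
  define j' where "j' = j - 1"
  define la where "la = length A"
  define lb where "lb = length B"
  define n where "n = length S"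
  define T where "T = TT A B S"
  have T: "T = la + lb + n" by (simp add: T_def TT_def la_def lb_def n_def)
  have jn: "j' < n" "j = Suc j'" using B j unfolding bwd_def j'_def n_def by auto
  have R: "M 3 = 1" "M 4 = n" "M 5 = la" "M 6 = lb" "M 7 = T" "M 8 = inb" "M 9 = inb + la"
    "M 10 = inb + la + lb" "M 11 = inb + T" "M 12 = inb + T + Suc n" "M 14 = Suc j'"
    using B jn unfolding bwd_def regs_def la_def lb_def n_def T_def by auto
  have ip: "inp_ok A B S inb M" using B by (simp add: bwd_def)
  have y: "M (inb + la + lb + j') = S ! j'" using inp_S[OF ip, of j'] jn by (simp add: la_def lb_def n_def)
  obtain M1 d1 where M1: "reach (95, M) (99, M1) d1" "d1 \<le> 4" "\<forall>r. r \<notin> {14,20,23} \<longrightarrow> M1 r = M r"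
    "M1 14 = j'" "M1 20 = S ! j'"
  proof -
    have ne: "24 \<le> inb + la + lb + j'" using jn ib by auto
    show ?thesis
      apply (rule that)
      apply (rule reach_stop | (rule reach_go, simp del: add_is_0 add_eq_0_iff_both_eq_0 add: ex_simps R ne y))+
      by (auto simp: ne y)
  qed
  define g where "g = gv A S j"
  have g15: "M1 15 = g" using M1(3)[rule_format, of 15] B by (simp add: bwd_def g_def)
  have P1: "M1 3 = 1" "M1 5 = la" "M1 9 = inb + la"
    using M1(3)[rule_format, of 3] M1(3)[rule_format, of 5] M1(3)[rule_format, of 9] R by simp_all
  have a: "M1 (inb + la - Suc g) = A ! (la - Suc g)" "24 \<le> inb + la - Suc g" if "g < la"
  proof -
    have e: "inb + la - Suc g = inb + (la - Suc g)" using that by simp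
    have "inb + (la - Suc g) \<notin> {14,20,23}" using ib by auto
    then have "M1 (inb + (la - Suc g)) = M (inb + (la - Suc g))" using M1(3) by blast
    moreover have "M (inb + (la - Suc g)) = A ! (la - Suc g)"
      using inp_A[OF ip, of "la - Suc g"] that by (simp add: la_def)
    ultimately show "M1 (inb + la - Suc g) = A ! (la - Suc g)" "24 \<le> inb + la - Suc g"
      unfolding e using ib by simp_all
  qed
  have a': "g < la \<longrightarrow> M1 (inb + la - Suc g) = A ! (la - Suc g)" "g < la \<longrightarrow> 24 \<le> inb + la - Suc g"
    using a by blast+
  obtain M2 d2 where M2: "reach (99, M1) (110, M2) d2" "d2 \<le> 11" "\<forall>r. r \<notin> {15,18,19,21,22} \<longrightarrow> M2 r = M1 r"
    "M2 15 = g + (if g < la \<and> A ! (la - Suc g) = S ! j' then 1 else 0)"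
    using blkA[of M1 la g "inb + la" "S ! j'" "A ! (la - Suc g)", OF P1(1,2) g15 P1(3) M1(5) a'(1) a'(2)]
    by (elim exE conjE) (rule that; assumption)
  have gA': "M2 15 = gv A S j'" using M2(4) gv_step[of j' S A] jn unfolding n_def by (simp add: g_def la_def)
  obtain M3 d3 where M3: "reach (110, M2) (112, M3) d3" "d3 \<le> 2" "\<forall>r. r \<notin> {23, inb + T + j'} \<longrightarrow> M3 r = M2 r"
    "M3 (inb + T + j') = gv A S j'"
  proof -
    have R2: "M2 11 = inb + T" "M2 14 = j'"
      using R M1(3)[rule_format, of 11] M2(3)[rule_format, of 11] M1(4) M2(3)[rule_format, of 14] by simp_all
    have ne: "24 \<le> inb + T + j'" using ib by simp
    show ?thesis
      apply (rule that)
      apply (rule reach_stop | (rule reach_go, simp del: add_is_0 add_eq_0_iff_both_eq_0 add: ex_simps R2 ne))+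
      by (auto simp: ne gA')
  qed
  define h where "h = gv B S j"
  have fr3: "M3 r = M r" if "r \<notin> {14,15,18,19,20,21,22,23, inb + T + j'}" for r
  proof -
    have "M3 r = M2 r" using M3(3) that by blast
    also have "\<dots> = M1 r" using M2(3) that by blast
    also have "\<dots> = M r" using M1(3) that by blast
    finally show ?thesis .
  qed
  have h16: "M3 16 = h" using fr3[of 16] ib B by (simp add: bwd_def h_def)
  have R3: "M3 3 = 1" "M3 6 = lb" "M3 10 = inb + la + lb"
    using fr3[of 3] fr3[of 6] fr3[of 10] R ib by simp_all
  have R3': "M3 20 = S ! j'"
  proof -
    have "M3 20 = M2 20" using M3(3) ib by simp
    also have "\<dots> = M1 20" using M2(3) by simp
    finally show ?thesis using M1(5) by simp
  qed
  have b: "M3 (inb + la + lb - Suc h) = B ! (lb - Suc h)" "24 \<le> inb + la + lb - Suc h" if "h < lb"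
  proof -
    have e: "inb + la + lb - Suc h = inb + la + (lb - Suc h)" using that by simp
    have "inb + la + (lb - Suc h) < inb + T" using T that by simp
    then have "inb + la + (lb - Suc h) \<notin> {14,15,18,19,20,21,22,23, inb + T + j'}" using ib by auto
    then have "M3 (inb + la + (lb - Suc h)) = M (inb + la + (lb - Suc h))" using fr3 by blast
    moreover have "M (inb + la + (lb - Suc h)) = B ! (lb - Suc h)"
      using inp_B[OF ip, of "lb - Suc h"] that by (simp add: la_def lb_def)
    ultimately show "M3 (inb + la + lb - Suc h) = B ! (lb - Suc h)" "24 \<le> inb + la + lb - Suc h"
      unfolding e using ib by simp_all
  qed
  have b': "h < lb \<longrightarrow> M3 (inb + la + lb - Suc h) = B ! (lb - Suc h)" "h < lb \<longrightarrow> 24 \<le> inb + la + lb - Suc h"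
    using b by blast+
  obtain M4 d4 where M4: "reach (112, M3) (123, M4) d4" "d4 \<le> 11" "\<forall>r. r \<notin> {16,18,19,21,22} \<longrightarrow> M4 r = M3 r"
    "M4 16 = h + (if h < lb \<and> B ! (lb - Suc h) = S ! j' then 1 else 0)"
    using blkB[of M3 lb h "inb + la + lb" "S ! j'" "B ! (lb - Suc h)", OF R3(1,2) h16 R3(3) R3' b'(1) b'(2)]
    by (elim exE conjE) (rule that; assumption)
  have gB': "M4 16 = gv B S j'" using M4(4) gv_step[of j' S B] jn unfolding n_def by (simp add: h_def lb_def)
  obtain M5 d5 where M5: "reach (123, M4) (95, M5) d5" "d5 \<le> 3" "\<forall>r. r \<notin> {23, inb + T + Suc n + j'} \<longrightarrow> M5 r = M4 r"
    "M5 (inb + T + Suc n + j') = gv B S j'"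
  proof -
    have R4: "M4 12 = inb + T + Suc n" "M4 14 = j'"
    proof -
      have "M4 12 = M3 12" "M4 14 = M3 14" using M4(3) by simp_all
      moreover have "M3 12 = M 12" using fr3[of 12] ib by simp
      moreover have "M3 14 = M2 14" using M3(3) ib by simp
      moreover have "M2 14 = M1 14" using M2(3) by simp
      ultimately show "M4 12 = inb + T + Suc n" "M4 14 = j'" using R M1(4) by simp_all
    qed
    have ne: "24 \<le> inb + T + Suc n + j'" using ib by simp
    show ?thesis
      apply (rule that)
      apply (rule reach_stop | (rule reach_go, simp del: add_is_0 add_eq_0_iff_both_eq_0 add: ex_simps R4 ne))+
      by (auto simp: ne gB')
  qed
  have reach: "reach (95, M) (95, M5) (d1 + d2 + d3 + d4 + d5)"
    using reach_trans[OF reach_trans[OF reach_trans[OF reach_trans[OF M1(1) M2(1)] M3(1)] M4(1)] M5(1)] .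
  have fr: "M5 r = M r" if "r \<notin> {14,15,16,18,19,20,21,22,23, inb + T + j', inb + T + Suc n + j'}" for r
  proof -
    have "M5 r = M4 r" using M5(3) that by blast
    also have "\<dots> = M3 r" using M4(3) that by blast
    also have "\<dots> = M r" using fr3 that by blast
    finally show ?thesis .
  qed
  have w1: "M5 (inb + T + j') = gv A S j'"
  proof -
    have "M5 (inb + T + j') = M4 (inb + T + j')" using M5(3) ib by simp
    also have "\<dots> = M3 (inb + T + j')" using M4(3) ib by simp
    finally show ?thesis using M3(4) by simp
  qed
  have r14: "M5 14 = j'"
  proof -
    have "M5 14 = M4 14" using M5(3) ib by simp
    also have "\<dots> = M3 14" using M4(3) by simp
    also have "\<dots> = M2 14" using M3(3) ib by simp
    also have "\<dots> = M1 14" using M2(3) by simp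
    finally show ?thesis using M1(4) by simp
  qed
  have r15: "M5 15 = gv A S j'"
  proof -
    have "M5 15 = M4 15" using M5(3) ib by simp
    also have "\<dots> = M3 15" using M4(3) by simp
    also have "\<dots> = M2 15" using M3(3) ib by simp
    finally show ?thesis using gA' by simp
  qed
  have r16: "M5 16 = gv B S j'"
  proof -
    have "M5 16 = M4 16" using M5(3) ib by simp
    then show ?thesis using gB' by simp
  qed
  have "bwd A B S inb j' M5"
    unfolding bwd_def
  proof (intro conjI)
    have "regs A B S inb M" using B unfolding bwd_def by blast
    then show "regs A B S inb M5"
      by (rule regs_frame) (use fr ib in auto)
    show "inp_ok A B S inb M5" using ip unfolding inp_ok_def
    proof (intro allI impI)
      fix i assume "\<forall>j<TT A B S. M (inb + j) = (A @ B @ S) ! j" "i < TT A B S"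
      moreover have "M5 (inb + i) = M (inb + i)" using \<open>i < TT A B S\<close> ib by (intro fr) (auto simp: T_def)
      ultimately show "M5 (inb + i) = (A @ B @ S) ! i" by simp
    qed
    show "M5 14 = j'" by (rule r14)
    show "M5 15 = gv A S j'" by (rule r15)
    show "M5 16 = gv B S j'" by (rule r16)
    show "j' \<le> length S" using jn by (simp add: n_def)
    show "\<forall>i. j' \<le> i \<longrightarrow> i \<le> length S \<longrightarrow> M5 (inb + TT A B S + i) = gv A S i \<and>
         M5 (inb + TT A B S + Suc (length S) + i) = gv B S i"
    proof (intro allI impI)
      fix i assume i: "j' \<le> i" "i \<le> length S"
      show "M5 (inb + TT A B S + i) = gv A S i \<and> M5 (inb + TT A B S + Suc (length S) + i) = gv B S i"
      proof (cases "i = j'")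
        case True
        then show ?thesis using M5(4) w1 by (simp add: T_def n_def)
      next
        case False
        then have "j \<le> i" using i jn by simp
        moreover have "M5 (inb + T + i) = M (inb + T + i)" using False ib i by (intro fr) (auto simp: n_def)
        moreover have "M5 (inb + T + Suc n + i) = M (inb + T + Suc n + i)" using False ib i jn by (intro fr) (auto simp: n_def)
        ultimately show ?thesis using B i unfolding bwd_def by (simp add: T_def n_def)
      qed
    qed
  qed
  then show ?thesis using reach M1(2) M2(2) M3(2) M4(2) M5(2)
    by (intro exI[of _ M5] exI[of _ "d1 + d2 + d3 + d4 + d5"]) (auto simp: j'_def)
qed


lemma fseg:
  assumes R: "M 3 = 1" "M 4 = n" "M 5 = la" "M 6 = lb" "M 10 = sb" "M 11 = ga" "M 12 = gb" "M 13 = ob"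
    "M 14 = k" "M 15 = fa" "M 16 = fb" "M 17 = ol"
    and k: "\<not> n \<le> k"
    and V: "M (sb + k) = y" "M (Suc (ga + k)) = da" "M (Suc (gb + k)) = db"
    and H: "24 \<le> sb + k" "23 \<le> ga + k" "23 \<le> gb + k" "24 \<le> ob + ol"
  shows "(la \<le> fa + da \<and> lb \<le> fb + db \<longrightarrow> (\<exists>M' d. reach (130,M) (130,M') d \<and> d \<le> 16 \<and>
            (\<forall>r. r \<notin> {14,18,20,21,22,23} \<longrightarrow> M' r = M r) \<and> M' 14 = Suc k)) \<and>
         (\<not>(la \<le> fa + da \<and> lb \<le> fb + db) \<longrightarrow> (\<exists>M' d. reach (130,M) (149,M') d \<and> d \<le> 19 \<and>
            (\<forall>r. r \<notin> {14,17,18,20,21,22,23, ob+ol} \<longrightarrow> M' r = M r) \<and> M' 14 = Suc k \<and> M' 17 = Suc ol \<and>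
            M' 20 = y \<and> M' (ob+ol) = y))"
proof (intro conjI impI)
  assume c: "la \<le> fa + da \<and> lb \<le> fb + db"
  then have c1: "la \<le> fa + da" and c2: "lb \<le> fb + db" by auto
  show "\<exists>M' d. reach (130,M) (130,M') d \<and> d \<le> 16 \<and>
            (\<forall>r. r \<notin> {14,18,20,21,22,23} \<longrightarrow> M' r = M r) \<and> M' 14 = Suc k"
    apply (intro exI conjI)
       apply (rule reach_go, simp del: add_is_0 add_eq_0_iff_both_eq_0 add: ex_simps R k V H c1 c2)
       apply (rule reach_stop | (rule reach_go, simp del: add_is_0 add_eq_0_iff_both_eq_0 add: ex_simps R k V H c1 c2))+
    using H by auto
next
  assume c: "\<not>(la \<le> fa + da \<and> lb \<le> fb + db)"
  show "\<exists>M' d. reach (130,M) (149,M') d \<and> d \<le> 19 \<and>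
            (\<forall>r. r \<notin> {14,17,18,20,21,22,23, ob+ol} \<longrightarrow> M' r = M r) \<and> M' 14 = Suc k \<and> M' 17 = Suc ol \<and>
            M' 20 = y \<and> M' (ob+ol) = y"
  proof (cases "la \<le> fa + da")
    case c1: True
    then have c2: "\<not> lb \<le> fb + db" using c by auto
    show ?thesis
      apply (intro exI conjI)
           apply (rule reach_stop | (rule reach_go, simp del: add_is_0 add_eq_0_iff_both_eq_0 add: ex_simps R k V H c1 c2))+
      using H by auto
  next
    case c1: False
    show ?thesis
      apply (intro exI conjI)
           apply (rule reach_stop | (rule reach_go, simp del: add_is_0 add_eq_0_iff_both_eq_0 add: ex_simps R k V H c1))+
      using H by auto
  qed
qed


definition fwd :: "nat list \<Rightarrow> nat list \<Rightarrow> nat list \<Rightarrow> nat \<Rightarrow> nat \<Rightarrow> (nat \<Rightarrow> nat) \<Rightarrow> bool" where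
  "fwd A B S inb k M \<longleftrightarrow> regs A B S inb M \<and> inp_ok A B S inb M \<and> k \<le> length S \<and>
     (\<forall>i. i \<le> length S \<longrightarrow> M (inb + TT A B S + i) = gv A S i \<and>
         M (inb + TT A B S + Suc (length S) + i) = gv B S i) \<and>
     M 14 = k \<and> M 15 = gm A (gst A B S k) \<and> M 16 = gm B (gst A B S k) \<and>
     M 17 = length (gst A B S k) \<and>
     (\<forall>i<length (gst A B S k). M (inb + TT A B S + Suc (length S) + Suc (length S) + i) = gst A B S k ! i)"

lemma bwd_exit:
  assumes "bwd A B S inb 0 M" "24 \<le> inb"
  shows "\<exists>M' d. reach (95, M) (130, M') d \<and> d \<le> 5 \<and> fwd A B S inb 0 M'"
proof -
  have R: "M 14 = 0" using assms by (simp add: bwd_def)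
  show ?thesis
    apply (intro exI conjI)
      apply (rule reach_stop | (rule reach_go, simp del: add_is_0 add_eq_0_iff_both_eq_0 add: ex_simps R))+
     apply simp
    using assms unfolding bwd_def fwd_def regs_def inp_ok_def
    by (auto simp: gv_def)
qed

lemma cs_gm:
  "common_supersequence A B (P @ drop (Suc k) S) \<longleftrightarrow>
     length A \<le> gm A P + gv A S (Suc k) \<and> length B \<le> gm B P + gv B S (Suc k)"
  unfolding common_supersequence_def gv_def subseq_concat_gm ..

lemma jmp169: "reach (169, M) (130, M) (Suc 0)"
  by (rule reach_go) (simp add: ex_simps reach_stop)

lemma fwd_iter:
  assumes F: "fwd A B S inb k M" and k: "k < length S" and ib: "24 \<le> inb"
  shows "\<exists>M' d. reach (130, M) (130, M') d \<and> d \<le> 40 \<and> fwd A B S inb (Suc k) M'"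
proof -
  define la where "la = length A"
  define lb where "lb = length B"
  define n where "n = length S"
  define T where "T = TT A B S"
  define P where "P = gst A B S k"
  define ob where "ob = inb + T + Suc n + Suc n"
  have T: "T = la + lb + n" by (simp add: T_def TT_def la_def lb_def n_def)
  have ip: "inp_ok A B S inb M" using F by (simp add: fwd_def)
  have R: "M 3 = 1" "M 4 = n" "M 5 = la" "M 6 = lb" "M 7 = T" "M 8 = inb" "M 9 = inb + la"
    "M 10 = inb + la + lb" "M 11 = inb + T" "M 12 = inb + T + Suc n" "M 13 = ob"
    "M 14 = k" "M 15 = gm A P" "M 16 = gm B P" "M 17 = length P"
    using F unfolding fwd_def regs_def la_def lb_def n_def T_def P_def ob_def by auto
  have arr: "M (inb + T + i) = gv A S i" "M (inb + T + Suc n + i) = gv B S i" if "i \<le> n" for i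
    using F that unfolding fwd_def T_def n_def by auto
  have out: "M (ob + i) = P ! i" if "i < length P" for i
    using F that unfolding fwd_def T_def n_def P_def ob_def by auto
  have kk: "\<not> n \<le> k" using k by (simp add: n_def)
  have V: "M (inb + la + lb + k) = S ! k" "M (Suc (inb + T + k)) = gv A S (Suc k)"
     "M (Suc (inb + T + Suc n + k)) = gv B S (Suc k)"
    using inp_S[OF ip, of k] k arr[of "Suc k"] by (simp_all add: la_def lb_def n_def)
  have H: "24 \<le> inb + la + lb + k" "23 \<le> inb + T + k" "23 \<le> inb + T + Suc n + k" "24 \<le> ob + length P"
    using ib by (auto simp: ob_def)
  note FS = fseg[of M n la lb "inb + la + lb" "inb + T" "inb + T + Suc n" ob k "gm A P" "gm B P" "length P"
      "S ! k" "gv A S (Suc k)" "gv B S (Suc k)", OF R(1-4) R(8-15) kk V H]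
  have fr0: "\<forall>i. i \<le> length S \<longrightarrow> M (inb + TT A B S + i) = gv A S i \<and>
         M (inb + TT A B S + Suc (length S) + i) = gv B S i"
    using arr by (simp add: T_def n_def)
  have rg: "regs A B S inb M" using F by (simp add: fwd_def)
  show ?thesis
  proof (cases "common_supersequence A B (P @ drop (Suc k) S)")
    case True
    then have g: "gst A B S (Suc k) = P" by (simp add: P_def)
    have c: "la \<le> gm A P + gv A S (Suc k) \<and> lb \<le> gm B P + gv B S (Suc k)"
      using True cs_gm by (simp add: la_def lb_def)
    then obtain M1 d1 where M1: "reach (130,M) (130,M1) d1" "d1 \<le> 16"
      "\<forall>r. r \<notin> {14,18,20,21,22,23} \<longrightarrow> M1 r = M r" "M1 14 = Suc k"
      using FS by blast
    have fr: "M1 r = M r" if "24 \<le> r \<or> r \<le> 13 \<or> r = 15 \<or> r = 16 \<or> r = 17" for r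
      using M1(3) that by auto
    have "fwd A B S inb (Suc k) M1"
      unfolding fwd_def g
    proof (intro conjI)
      show "regs A B S inb M1" using rg by (rule regs_frame) (use fr in auto)
      show "inp_ok A B S inb M1" using ip ib fr unfolding inp_ok_def by auto
      show "Suc k \<le> length S" using k by simp
      show "\<forall>i. i \<le> length S \<longrightarrow> M1 (inb + TT A B S + i) = gv A S i \<and>
         M1 (inb + TT A B S + Suc (length S) + i) = gv B S i" using fr0 fr ib by auto
      show "M1 14 = Suc k" by (rule M1(4))
      show "M1 15 = gm A P" "M1 16 = gm B P" "M1 17 = length P" using fr R by auto
      show "\<forall>i<length P. M1 (inb + TT A B S + Suc (length S) + Suc (length S) + i) = P ! i"
        using out fr ib by (auto simp: ob_def T_def n_def)
    qed
    then show ?thesis using M1(1,2) by (intro exI[of _ M1] exI[of _ d1]) auto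
  next
    case False
    then have g: "gst A B S (Suc k) = P @ [S ! k]" by (simp add: P_def)
    have c: "\<not> (la \<le> gm A P + gv A S (Suc k) \<and> lb \<le> gm B P + gv B S (Suc k))"
      using False cs_gm by (simp add: la_def lb_def)
    then obtain M1 d1 where M1: "reach (130,M) (149,M1) d1" "d1 \<le> 19"
      "\<forall>r. r \<notin> {14,17,18,20,21,22,23, ob + length P} \<longrightarrow> M1 r = M r" "M1 14 = Suc k"
      "M1 17 = Suc (length P)" "M1 20 = S ! k" "M1 (ob + length P) = S ! k"
      using FS by blast
    have fr1: "M1 r = M r" if "r \<notin> {14,17,18,20,21,22,23, ob + length P}" for r
      using M1(3) that by blast
    define fa where "fa = gm A P"
    have P1: "M1 3 = 1" "M1 5 = la" "M1 15 = fa" "M1 8 = inb"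
      using fr1[of 3] fr1[of 5] fr1[of 15] fr1[of 8] R ib by (simp_all add: ob_def fa_def)
    have a: "fa < la \<longrightarrow> M1 (inb + fa) = A ! fa" "fa < la \<longrightarrow> 24 \<le> inb + fa"
    proof (intro impI)
      assume "fa < la"
      moreover have "M1 (inb + fa) = M (inb + fa)" using ib \<open>fa < la\<close> T by (intro fr1) (auto simp: ob_def)
      ultimately show "M1 (inb + fa) = A ! fa" using inp_A[OF ip, of fa] by (simp add: la_def)
    qed (use ib in simp)
    obtain M2 d2 where M2: "reach (149, M1) (159, M2) d2" "d2 \<le> 10" "\<forall>r. r \<notin> {15,18,19,21,22} \<longrightarrow> M2 r = M1 r"
      "M2 15 = fa + (if fa < la \<and> A ! fa = S ! k then 1 else 0)"
      using blkUA[of M1 la fa inb "S ! k" "A ! fa", OF P1 M1(6) a(1) a(2)]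
      by (elim exE conjE) (rule that; assumption)
    define fb where "fb = gm B P"
    have fr2: "M2 r = M r" if "r \<notin> {14,15,17,18,19,20,21,22,23, ob + length P}" for r
      using M2(3) fr1 that by auto
    have P2: "M2 3 = 1" "M2 6 = lb" "M2 16 = fb" "M2 9 = inb + la"
      using fr2[of 3] fr2[of 6] fr2[of 16] fr2[of 9] R ib by (simp_all add: ob_def fb_def)
    have P2': "M2 20 = S ! k" using M2(3) M1(6) by simp
    have b: "fb < lb \<longrightarrow> M2 (inb + la + fb) = B ! fb" "fb < lb \<longrightarrow> 24 \<le> inb + la + fb"
    proof (intro impI)
      assume "fb < lb"
      moreover have "M2 (inb + la + fb) = M (inb + la + fb)" using ib \<open>fb < lb\<close> T by (intro fr2) (auto simp: ob_def)
      ultimately show "M2 (inb + la + fb) = B ! fb" using inp_B[OF ip, of fb] by (simp add: la_def lb_def)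
    qed (use ib in simp)
    obtain M3 d3 where M3: "reach (159, M2) (169, M3) d3" "d3 \<le> 10" "\<forall>r. r \<notin> {16,18,19,21,22} \<longrightarrow> M3 r = M2 r"
      "M3 16 = fb + (if fb < lb \<and> B ! fb = S ! k then 1 else 0)"
      using blkUB[of M2 lb fb "inb + la" "S ! k" "B ! fb", OF P2(1,2,3,4) P2' b(1) b(2)]
      by (elim exE conjE) (rule that; assumption)
    have fr3: "M3 r = M r" if "r \<notin> {14,15,16,17,18,19,20,21,22,23, ob + length P}" for r
      using M3(3) fr2 that by auto
    have reach: "reach (130, M) (130, M3) (d1 + d2 + d3 + Suc 0)"
      using reach_trans[OF reach_trans[OF reach_trans[OF M1(1) M2(1)] M3(1)] jmp169] .
    have v15: "M3 15 = gm A (P @ [S ! k])"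
    proof -
      have "M3 15 = M2 15" using M3(3) by simp
      then show ?thesis using M2(4) by (simp add: gm_snoc fa_def la_def)
    qed
    have v16: "M3 16 = gm B (P @ [S ! k])" using M3(4) by (simp add: gm_snoc fb_def lb_def)
    have v14: "M3 14 = Suc k" "M3 17 = Suc (length P)"
      using M3(3) M2(3) M1(4,5) by simp_all
    have vo: "M3 (ob + length P) = S ! k"
    proof -
      have "M3 (ob + length P) = M2 (ob + length P)" using M3(3) ib by (simp add: ob_def)
      also have "\<dots> = M1 (ob + length P)" using M2(3) ib by (simp add: ob_def)
      finally show ?thesis using M1(7) by simp
    qed
    have "fwd A B S inb (Suc k) M3"
      unfolding fwd_def g
    proof (intro conjI)
      show "regs A B S inb M3" using rg by (rule regs_frame) (use fr3 ib in \<open>auto simp: ob_def\<close>)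
      show "inp_ok A B S inb M3" unfolding inp_ok_def
      proof (intro allI impI)
        fix i assume i: "i < TT A B S"
        then have "M3 (inb + i) = M (inb + i)" using ib by (intro fr3) (auto simp: ob_def T_def)
        then show "M3 (inb + i) = (A @ B @ S) ! i" using ip i unfolding inp_ok_def by simp
      qed
      show "Suc k \<le> length S" using k by simp
      show "\<forall>i. i \<le> length S \<longrightarrow> M3 (inb + TT A B S + i) = gv A S i \<and>
         M3 (inb + TT A B S + Suc (length S) + i) = gv B S i"
      proof (intro allI impI)
        fix i assume i: "i \<le> length S"
        have "M3 (inb + T + i) = M (inb + T + i)" using ib i by (intro fr3) (auto simp: ob_def n_def)
        moreover have "M3 (inb + T + Suc n + i) = M (inb + T + Suc n + i)" using ib i by (intro fr3) (auto simp: ob_def n_def)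
        ultimately show "M3 (inb + TT A B S + i) = gv A S i \<and>
         M3 (inb + TT A B S + Suc (length S) + i) = gv B S i" using arr[of i] i by (simp add: T_def n_def)
      qed
      show "M3 14 = Suc k" by (rule v14(1))
      show "M3 15 = gm A (P @ [S ! k])" by (rule v15)
      show "M3 16 = gm B (P @ [S ! k])" by (rule v16)
      show "M3 17 = length (P @ [S ! k])" using v14(2) by simp
      show "\<forall>i<length (P @ [S ! k]). M3 (inb + TT A B S + Suc (length S) + Suc (length S) + i) = (P @ [S ! k]) ! i"
      proof (intro allI impI)
        fix i assume i: "i < length (P @ [S ! k])"
        show "M3 (inb + TT A B S + Suc (length S) + Suc (length S) + i) = (P @ [S ! k]) ! i"
        proof (cases "i < length P")
          case True
          have "M3 (ob + i) = M (ob + i)" using ib True by (intro fr3) (auto simp: ob_def)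
          then show ?thesis using out[OF True] True by (simp add: ob_def T_def n_def nth_append)
        next
          case False
          then have "i = length P" using i by simp
          then show ?thesis using vo by (simp add: ob_def T_def n_def nth_append)
        qed
      qed
    qed
    then show ?thesis using reach M1(2) M2(2) M3(2)
      by (intro exI[of _ M3] exI[of _ "d1 + d2 + d3 + Suc 0"]) auto
  qed
qed

lemma fwd_exit:
  assumes F: "fwd A B S inb (length S) M" and ib: "24 \<le> inb"
  shows "\<exists>M' d. reach (130, M) (174, M') d \<and> d \<le> 6 \<and> ram_output M' = gst A B S (length S)"
proof -
  define P where "P = gst A B S (length S)"
  define ob where "ob = inb + TT A B S + Suc (length S) + Suc (length S)"
  have R: "M 4 = length S" "M 14 = length S" "M 13 = ob" "M 17 = length P"
    using F unfolding fwd_def regs_def P_def ob_def by auto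
  have out: "M (ob + i) = P ! i" if "i < length P" for i
    using F that unfolding fwd_def P_def ob_def by auto
  have H: "24 \<le> ob" using ib by (simp add: ob_def)
  show ?thesis
    apply (intro exI conjI)
      apply (rule reach_stop | (rule reach_go, simp del: add_is_0 add_eq_0_iff_both_eq_0 add: ex_simps R))+
     apply simp
    unfolding ram_output_def P_def[symmetric]
    apply (rule nth_equalityI)
     apply simp
    using out H by simp
qed


lemma preA1:
  assumes M0: "M 0 = la" "M 1 = lb" "M 2 = n" and pos: "la + lb + n \<noteq> 0"
  notes M1' = M0(2)[unfolded One_nat_def]
  shows "\<exists>M' d. reach (0, M) (7, M') d \<and> d \<le> 7 \<and>
    M' 0 = 4 * (la + lb + n) + lb \<and> M' 1 = lb + 3 * (la + lb + n) \<and> M' 2 = n \<and>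
    (\<forall>r. r \<notin> {0, 1} \<longrightarrow> M' r = M r)"
    apply (intro exI conjI)
      apply (rule reach_stop | (rule reach_go, simp del: add_is_0 add_eq_0_iff_both_eq_0 add: ex_simps M0 M1' pos s2))+
  using M0 M1' by auto

lemma preA2:
  assumes M0: "M 0 = x0" "M 1 = v1" "M 2 = n" and x: "x0 \<noteq> 0" "x0 \<noteq> Suc 0" "x0 \<noteq> 2"
  shows "\<exists>M' d. reach (7, M) (12, M') d \<and> d \<le> 5 \<and>
    M' 0 = x0 + 50 \<and> M' 1 = 50 \<and> M' 2 = 1 \<and> M' x0 = v1 \<and> M' (x0 + 50) = n \<and>
    (\<forall>r. r \<notin> {0, 1, 2, x0, x0 + 50} \<longrightarrow> M' r = M r)"
    apply (intro exI conjI)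
      apply (rule reach_stop | (rule reach_go, simp del: add_is_0 add_eq_0_iff_both_eq_0 add: ex_simps M0 x s2))+
  using x M0 M0(2)[unfolded One_nat_def] by auto

lemma prog_save_all: "\<forall>j<Suc (Suc (Suc (Suc (Suc (Suc (Suc (Suc (Suc (Suc (Suc (Suc (Suc (Suc (Suc (Suc (Suc (Suc (Suc (Suc (Suc (0))))))))))))))))))))). prog ! (12 + 2 * j) = Add 0 0 2 \<and> prog ! (13 + 2 * j) = StoreI 0 (3 + j)"
  unfolding All_less_Suc by (simp add: prog_nth)

lemma prog_save: assumes "j < 21" shows "prog ! (12 + 2 * j) = Add 0 0 2 \<and> prog ! (13 + 2 * j) = StoreI 0 (3 + j)"
proof -
  have "j < Suc (Suc (Suc (Suc (Suc (Suc (Suc (Suc (Suc (Suc (Suc (Suc (Suc (Suc (Suc (Suc (Suc (Suc (Suc (Suc (Suc (0)))))))))))))))))))))" using assms by simp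
  then show ?thesis using prog_save_all by blast
qed

lemma save_pair:
  assumes j: "j < 21" and M: "M 0 = a" "M 2 = 1"
  shows "reach (12 + 2 * j, M) (12 + 2 * Suc j, M(0 := Suc a, Suc a := M (3 + j))) (Suc (Suc 0))"
proof -
  have p: "12 + 2 * j < 174" "13 + 2 * j < 174" using j by auto
  have ps: "prog ! (12 + 2 * j) = Add 0 0 2" "prog ! (13 + 2 * j) = StoreI 0 (3 + j)"
    using prog_save[OF j] by auto
  have s1: "step prog (12 + 2 * j, M) = (13 + 2 * j, M(0 := Suc a))"
    by (simp only: step_prog[OF p(1)] ps(1) exec_instr.simps M) simp
  have s2: "step prog (13 + 2 * j, M(0 := Suc a)) = (12 + 2 * Suc j, M(0 := Suc a, Suc a := M (3 + j)))"
    by (simp only: step_prog[OF p(2)] ps(2) exec_instr.simps) simp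
  show ?thesis
    by (rule reach_go, unfold s1, rule reach_go, unfold s2, rule reach_stop)
qed

lemma save_loop:
  assumes "M 0 = x" "M 2 = 1" "24 \<le> x"
  shows "j \<le> 21 \<Longrightarrow> \<exists>M'. reach (12, M) (12 + 2 * j, M') (2 * j) \<and> M' 0 = x + j \<and> M' 2 = 1 \<and>
     (\<forall>i<j. M' (x + 1 + i) = M (3 + i)) \<and> (\<forall>r. r \<noteq> 0 \<and> (r \<le> x \<or> x + j < r) \<longrightarrow> M' r = M r)"
proof (induction j)
  case 0
  then show ?case using assms by (intro exI[of _ M]) (auto simp: reach_stop)
next
  case (Suc j)
  then obtain M1 where M1: "reach (12, M) (12 + 2 * j, M1) (2 * j)" "M1 0 = x + j" "M1 2 = 1"
     "\<forall>i<j. M1 (x + 1 + i) = M (3 + i)" "\<forall>r. r \<noteq> 0 \<and> (r \<le> x \<or> x + j < r) \<longrightarrow> M1 r = M r" by auto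
  have j: "j < 21" using Suc by simp
  have v: "M1 (3 + j) = M (3 + j)" using M1(5) assms(3) j by auto
  define M2 where "M2 = M1(0 := Suc (x + j), Suc (x + j) := M1 (3 + j))"
  have r: "reach (12, M) (12 + 2 * Suc j, M2) (2 * j + 2)"
    using reach_trans[OF M1(1) save_pair[OF j M1(2,3)]] unfolding M2_def by simp
  show ?case
  proof (intro exI[of _ M2] conjI)
    show "reach (12, M) (12 + 2 * Suc j, M2) (2 * Suc j)" using r by simp
    show "M2 0 = x + Suc j" by (simp add: M2_def)
    show "M2 2 = 1" using M1(3) assms(3) by (simp add: M2_def)
    show "\<forall>i<Suc j. M2 (x + 1 + i) = M (3 + i)"
      using M1(4) v by (auto simp: M2_def less_Suc_eq)
    show "\<forall>r. r \<noteq> 0 \<and> (r \<le> x \<or> x + Suc j < r) \<longrightarrow> M2 r = M r"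
      using M1(5) by (auto simp: M2_def)
  qed
qed

lemma preC:
  assumes M0: "M 0 = x0 + 71" "M x0 = v1" "M (x0 + 50) = v2" and x: "4 \<le> x0"
  shows "\<exists>M' d. reach (54, M) (78, M') d \<and> d \<le> 24 \<and>
    M' 3 = 1 \<and> M' 4 = v2 \<and> M' 7 = x0 - v1 \<and>
    M' 6 = v1 - (x0 - v1) - (x0 - v1) - (x0 - v1) \<and>
    M' 5 = (x0 - v1) - (v1 - (x0 - v1) - (x0 - v1) - (x0 - v1)) - v2 \<and>
    M' 8 = x0 + 51 \<and> M' 9 = x0 + 51 + M' 5 \<and> M' 10 = M' 9 + M' 6 \<and> M' 11 = M' 10 + v2 \<and>
    M' 12 = M' 11 + v2 + 1 \<and> M' 13 = M' 12 + v2 + 1 \<and> M' 14 = 21 \<and>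
    (\<forall>r. r \<noteq> 1 \<and> (r < 3 \<or> 23 < r) \<longrightarrow> M' r = M r)"
proof -
  have ne: "x0 \<noteq> 1" "x0 \<noteq> Suc 0" "24 \<le> x0 + 50" "24 \<le> 50 + x0" "M (50 + x0) = v2"
    using x M0(3) by (auto simp: add.commute)
  show ?thesis
    apply (intro exI conjI)
      apply (rule reach_stop | (rule reach_go, simp del: add_is_0 add_eq_0_iff_both_eq_0 add: ex_simps M0 ne))+
    using ne by auto
qed


lemma init_facts:
  "init_mem A B S 0 = length A" "init_mem A B S 1 = length B" "init_mem A B S 2 = length S"
  "\<And>i. i < TT A B S \<Longrightarrow> init_mem A B S (3 + i) = (A @ B @ S) ! i"
  unfolding init_mem_def TT_def by auto

lemma pre_all:
  assumes pos: "0 < TT A B S"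
  shows "\<exists>M' d. reach (0, init_mem A B S) (78, M') d \<and> d \<le> 78 \<and>
     cpy A B S (4 * TT A B S + length B + 51) 21 M'"
proof -
  define M where "M = init_mem A B S"
  define la where "la = length A"
  define lb where "lb = length B"
  define n where "n = length S"
  define s where "s = TT A B S"
  have s: "s = la + lb + n" by (simp add: s_def TT_def la_def lb_def n_def)
  have sp: "la + lb + n \<noteq> 0" using pos s s_def by simp
  have I: "M 0 = la" "M 1 = lb" "M 2 = n" using init_facts by (simp_all add: M_def la_def lb_def n_def)
  have Iin: "M (3 + i) = (A @ B @ S) ! i" if "i < s" for i using init_facts(4) that by (simp add: M_def s_def)
  define x0 where "x0 = 4 * s + lb"
  obtain M1 d1 where M1: "reach (0, M) (7, M1) d1" "d1 \<le> 7" "M1 0 = x0" "M1 1 = lb + 3 * s" "M1 2 = n"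
     "\<forall>r. r \<notin> {0, 1} \<longrightarrow> M1 r = M r"
    using preA1[OF I sp] unfolding s[symmetric] x0_def by blast
  have x0: "x0 \<noteq> 0" "x0 \<noteq> Suc 0" "x0 \<noteq> 2" "3 + s \<le> x0" using sp s by (auto simp: x0_def)
  obtain M2 d2 where M2: "reach (7, M1) (12, M2) d2" "d2 \<le> 5" "M2 0 = x0 + 50" "M2 1 = 50" "M2 2 = 1"
     "M2 x0 = lb + 3 * s" "M2 (x0 + 50) = n" "\<forall>r. r \<notin> {0, 1, 2, x0, x0 + 50} \<longrightarrow> M2 r = M1 r"
    using preA2[OF M1(3,4,5) x0(1,2,3)] by blast
  obtain M3 where M3: "reach (12, M2) (12 + 2 * 21, M3) (2 * 21)" "M3 0 = x0 + 50 + 21" "M3 2 = 1"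
     "\<forall>i<21. M3 (x0 + 50 + 1 + i) = M2 (3 + i)"
     "\<forall>r. r \<noteq> 0 \<and> (r \<le> x0 + 50 \<or> x0 + 50 + 21 < r) \<longrightarrow> M3 r = M2 r"
    using save_loop[OF M2(3,5), of 21] by auto
  have M3r: "reach (12, M2) (54, M3) 42" using M3(1) by simp
  have M3v: "M3 0 = x0 + 71" "M3 x0 = lb + 3 * s" "M3 (x0 + 50) = n"
    using M3(2) M3(5)[rule_format, of x0] M3(5)[rule_format, of "x0 + 50"] M2(6,7) x0 by auto
  have x4: "4 \<le> x0" using sp s by (auto simp: x0_def)
  obtain M4 d4 where M4: "reach (54, M3) (78, M4) d4" "d4 \<le> 24"
    "M4 3 = 1" "M4 4 = n" "M4 7 = x0 - (lb + 3 * s)"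
    "M4 6 = (lb + 3 * s) - (x0 - (lb + 3 * s)) - (x0 - (lb + 3 * s)) - (x0 - (lb + 3 * s))"
    "M4 5 = (x0 - (lb + 3 * s)) - ((lb + 3 * s) - (x0 - (lb + 3 * s)) - (x0 - (lb + 3 * s)) - (x0 - (lb + 3 * s))) - n"
    "M4 8 = x0 + 51" "M4 9 = x0 + 51 + M4 5" "M4 10 = M4 9 + M4 6" "M4 11 = M4 10 + n"
    "M4 12 = M4 11 + n + 1" "M4 13 = M4 12 + n + 1" "M4 14 = 21"
    "\<forall>r. r \<noteq> 1 \<and> (r < 3 \<or> 23 < r) \<longrightarrow> M4 r = M3 r"
    using preC[OF M3v x4] by blast
  have e1: "x0 - (lb + 3 * s) = s" by (simp add: x0_def)
  have vals: "M4 7 = s" "M4 6 = lb" "M4 5 = la" using M4(5,6,7) e1 s by simp_all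
  define inb where "inb = x0 + 51"
  have reach: "reach (0, M) (78, M4) (d1 + d2 + 2 * 21 + d4)"
    using reach_trans[OF reach_trans[OF reach_trans[OF M1(1) M2(1)] M3r] M4(1)] by simp
  have "cpy A B S inb 21 M4"
    unfolding cpy_def
  proof (intro conjI)
    show "regs A B S inb M4" unfolding regs_def
      using M4(3,4,8-14) vals s by (simp add: inb_def la_def lb_def n_def s_def TT_def)
    show "M4 14 = 21" by (rule M4(14))
    show "21 \<le> (21::nat)" by simp
    show "\<forall>j<TT A B S. j < 21 \<longrightarrow> M4 (inb + j) = (A @ B @ S) ! j"
    proof (intro allI impI)
      fix j assume j: "j < TT A B S" "j < 21"
      have "M4 (inb + j) = M3 (inb + j)" using M4(15) by (auto simp: inb_def)
      also have "\<dots> = M3 (x0 + 50 + 1 + j)" by (simp add: inb_def add.commute add.left_commute)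
      also have "\<dots> = M2 (3 + j)" using M3(4) j by simp
      also have "\<dots> = M1 (3 + j)" using M2(8) x0 j s_def by auto
      also have "\<dots> = M (3 + j)" using M1(6) by simp
      also have "\<dots> = (A @ B @ S) ! j" using Iin j s_def by simp
      finally show "M4 (inb + j) = (A @ B @ S) ! j" .
    qed
    show "\<forall>j. 21 \<le> j \<longrightarrow> j < TT A B S \<longrightarrow> M4 (3 + j) = (A @ B @ S) ! j"
    proof (intro allI impI)
      fix j assume j: "21 \<le> j" "j < TT A B S"
      have "M4 (3 + j) = M3 (3 + j)" using M4(15) j by auto
      also have "\<dots> = M2 (3 + j)" using M3(5) j x0 s_def by auto
      also have "\<dots> = M1 (3 + j)" using M2(8) x0 j s_def by auto
      also have "\<dots> = M (3 + j)" using M1(6) by simp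
      also have "\<dots> = (A @ B @ S) ! j" using Iin j s_def by simp
      finally show "M4 (3 + j) = (A @ B @ S) ! j" .
    qed
  qed
  moreover have "inb = 4 * TT A B S + length B + 51" by (simp add: inb_def x0_def s_def lb_def)
  ultimately show ?thesis using reach M1(2) M2(2) M4(2) unfolding M_def
    by (intro exI[of _ M4] exI[of _ "d1 + d2 + 2 * 21 + d4"]) auto
qed


lemma empty_case:
  assumes "TT A B S = 0"
  shows "halted prog (run prog 3 (0, init_mem A B S)) \<and>
     ram_output (snd (run prog 3 (0, init_mem A B S))) = []"
proof -
  have I: "init_mem A B S 0 = 0" "init_mem A B S 1 = 0" "init_mem A B S 2 = 0"
    using assms init_facts(1-3)[of A B S] by (simp_all add: TT_def)
  have I1: "init_mem A B S (Suc 0) = 0" using I(2) by simp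
  have "run prog 3 (0, init_mem A B S) = (174, (init_mem A B S)(0 := 0))"
    unfolding numeral_3_eq_3 run_Suc run_0
    by (simp add: ex_simps I I1 s2)
  then show ?thesis by (simp add: halted_def prog_len ram_output_def)
qed

lemma main_run:
  assumes cs: "common_supersequence A B S"
  shows "\<exists>t. t \<le> 100 * (length S + length A + length B + 1) \<and>
            halted prog (run prog t (0, init_mem A B S)) \<and>
            ram_output (snd (run prog t (0, init_mem A B S))) = gst A B S (length S)"
proof (cases "TT A B S = 0")
  case True
  then have "S = []" by (simp add: TT_def)
  then show ?thesis using empty_case[OF True] by (intro exI[of _ 3]) auto
next
  case False
  define T where "T = TT A B S"
  define n where "n = length S"
  define inb where "inb = 4 * TT A B S + length B + 51"
  have ib: "24 \<le> inb" "3 + TT A B S \<le> inb" by (auto simp: inb_def)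
  obtain M1 d1 where M1: "reach (0, init_mem A B S) (78, M1) d1" "d1 \<le> 78" "cpy A B S inb 21 M1"
    using pre_all[of A B S] False unfolding inb_def by auto
  obtain M2 d2 where M2: "reach (78, M1) (78, M2) d2" "d2 \<le> (T - 21) * 9" "cpy A B S inb (21 + (T - 21)) M2"
  proof -
    have "\<exists>M' d. reach (78, M1) (78, M') d \<and> d \<le> (T - 21) * 9 \<and> cpy A B S inb (21 + (T - 21)) M'"
    proof (rule loop_gen[where Inv = "\<lambda>k M. cpy A B S inb (21 + k) M"])
      fix k M assume "k < T - 21" "cpy A B S inb (21 + k) M"
      then show "\<exists>M' d. reach (78, M) (78, M') d \<and> d \<le> 9 \<and> cpy A B S inb (21 + Suc k) M'"
        using cpy_iter[of A B S inb "21 + k" M] ib by (auto simp: T_def)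
    qed (use M1 in simp)
    then show ?thesis using that by blast
  qed
  obtain M3 d3 where M3: "reach (78, M2) (95, M3) d3" "d3 \<le> 10" "bwd A B S inb n M3"
  proof -
    have "TT A B S \<le> 21 + (T - 21)" by (simp add: T_def)
    from cpy_exit[OF M2(3) this ib(1)] show ?thesis using that by (auto simp: n_def)
  qed
  obtain M4 d4 where M4: "reach (95, M3) (95, M4) d4" "d4 \<le> n * 35" "bwd A B S inb (n - n) M4"
  proof -
    have "\<exists>M' d. reach (95, M3) (95, M') d \<and> d \<le> n * 35 \<and> bwd A B S inb (n - n) M'"
    proof (rule loop_gen[where Inv = "\<lambda>k M. bwd A B S inb (n - k) M"])
      fix k M assume "k < n" "bwd A B S inb (n - k) M"
      moreover have "0 < n - k" "n - k - 1 = n - Suc k" using \<open>k < n\<close> by simp_all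
      ultimately show "\<exists>M' d. reach (95, M) (95, M') d \<and> d \<le> 35 \<and> bwd A B S inb (n - Suc k) M'"
        using bwd_iter[of A B S inb "n - k" M] ib(1) by simp
    qed (use M3 in simp)
    then show ?thesis using that by blast
  qed
  obtain M5 d5 where M5: "reach (95, M4) (130, M5) d5" "d5 \<le> 5" "fwd A B S inb 0 M5"
    using bwd_exit[of A B S inb M4] M4(3) ib by auto
  obtain M6 d6 where M6: "reach (130, M5) (130, M6) d6" "d6 \<le> n * 40" "fwd A B S inb n M6"
  proof -
    have "\<exists>M' d. reach (130, M5) (130, M') d \<and> d \<le> n * 40 \<and> fwd A B S inb n M'"
    proof (rule loop_gen[where Inv = "\<lambda>k M. fwd A B S inb k M"])
      fix k M assume "k < n" "fwd A B S inb k M"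
      then show "\<exists>M' d. reach (130, M) (130, M') d \<and> d \<le> 40 \<and> fwd A B S inb (Suc k) M'"
        using fwd_iter[of A B S inb k M] ib by (auto simp: n_def)
    qed (use M5 in simp)
    then show ?thesis using that by blast
  qed
  obtain M7 d7 where M7: "reach (130, M6) (174, M7) d7" "d7 \<le> 6" "ram_output M7 = gst A B S (length S)"
    using fwd_exit[of A B S inb M6] M6(3) ib by (auto simp: n_def)
  define t where "t = d1 + d2 + d3 + d4 + d5 + d6 + d7"
  have r: "reach (0, init_mem A B S) (174, M7) t"
    unfolding t_def
    by (rule reach_trans[OF reach_trans[OF reach_trans[OF reach_trans[OF reach_trans[OF reach_trans[OF M1(1) M2(1)] M3(1)] M4(1)] M5(1)] M6(1)] M7(1)])
  have Tn: "T = length A + length B + n" by (simp add: T_def TT_def n_def)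
  have "t \<le> 78 + (T - 21) * 9 + 10 + n * 35 + 5 + n * 40 + 6"
    using M1(2) M2(2) M3(2) M4(2) M5(2) M6(2) M7(2) unfolding t_def by linarith
  also have "\<dots> \<le> 100 * (length S + length A + length B + 1)"
    using Tn by (simp add: n_def)
  finally have tb: "t \<le> 100 * (length S + length A + length B + 1)" .
  show ?thesis
    using r tb M7(3) unfolding reach_def
    by (intro exI[of _ t]) (simp add: halted_def prog_len)
qed

theorem mainTheorem4:
  shows "\<exists>(P :: instr list) (c :: nat).
     \<forall>A B S :: nat list. common_supersequence A B S \<longrightarrow>
       (\<exists>t. t \<le> c * (length S + length A + length B + 1) \<and>
            halted P (run P t (0, init_mem A B S)) \<and>
            (let S' = ram_output (snd (run P t (0, init_mem A B S))) in
               minimal_common_supersequence A B S' \<and> subseq S' S))"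
proof (rule exI[of _ prog], rule exI[of _ 100], intro allI impI)
  fix A B S :: "nat list"
  assume cs: "common_supersequence A B S"
  obtain t where t: "t \<le> 100 * (length S + length A + length B + 1)"
    "halted prog (run prog t (0, init_mem A B S))"
    "ram_output (snd (run prog t (0, init_mem A B S))) = gst A B S (length S)"
    using main_run[OF cs] by blast
  show "\<exists>t. t \<le> 100 * (length S + length A + length B + 1) \<and>
            halted prog (run prog t (0, init_mem A B S)) \<and>
            (let S' = ram_output (snd (run prog t (0, init_mem A B S))) in
               minimal_common_supersequence A B S' \<and> subseq S' S)"
    using t gst_correct[OF cs] by (intro exI[of _ t]) simp
qed

end
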